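(* Let $Y$ be a sofic shift, $d$ a metric for the topology of $X_{\mathbb K(Y)}$, $x \in X_{\mathbb K(Y)}$ and $N\in \mathbb Z$. There is a periodic point $p \in Y$ and an element $x' \in X_{\mathbb K(Y)}$ such that $x'_i = x_i$ for all $i \geq N$ and $\lim_{i \to -\infty} d(\sigma^i(x'),\sigma^i(\alpha_Y(p))) = 0$. In particular, $x' \in \mathcal R(L_{\mathbb K(Y)})$.
   Context: For a sofic shift $Y\subseteq A^{\mathbb Z}$ and $y\in Y$, $F(y)=\{w\in Y[0,\infty): y_{(-\infty,-1]}w\in Y\}$, where $Y[0,\infty)=\{y_{[0,\infty)}:y\in Y\}$. The future cover $(\mathbb K(Y),L_{\mathbb K(Y)})$ is the labeled graph with vertices the distinct sets $F(y)$, $y\in Y$, and an edge labeled $a\in A$ from $F(y)$ to $F(z)$ exactly when $F(z)=\{w\in A^{\mathbb N}: aw\in F(y)\}$ (one edge per such pair and label); $X_{\mathbb K(Y)}$ is its edge shift with shift map $\sigma$, and $L_{\mathbb K(Y)}$ reads labels coordinatewise. $\alpha_Y:Y\to X_{\mathbb K(Y)}$ is the map such that, for each $i$, the $i$-th edge of $\alpha_Y(y)$ has source $F(\sigma^i(y))$ and label $y_i$ (so $L_{\mathbb K(Y)}(\alpha_Y(y))=y$). For $x\in X_{\mathbb K(Y)}$, $\mathbb U(x)=\{z:\exists N\ \forall i\le N,\ z_i=x_i\}$ (similarly in $Y$); $x$ is a regular ray if $L_{\mathbb K(Y)}$ maps $\mathbb U(x)$ onto $\mathbb U(L_{\mathbb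 K(Y)}(x))$, and $\mathcal R(L_{\mathbb K(Y)})$ is the set of regular rays. *)

theory Defs
  imports "HOL-Analysis.Analysis"
begin

text \<open>Points of A^Z are functions int => 'a, with the finite alphabet A = UNIV :: 'a set
  ('a :: finite).  One-sided sequences in A^N are functions nat => 'a.\<close>

definition sofic :: "(int \<Rightarrow> 'a::finite) set \<Rightarrow> bool" where
  "sofic Y \<longleftrightarrow> (\<exists>(E :: nat set) (src :: nat \<Rightarrow> nat) (tgt :: nat \<Rightarrow> nat) (lab :: nat \<Rightarrow> 'a).
      finite E \<and>
      Y = {(\<lambda>i. lab (p i)) | p. \<forall>i. p i \<in> E \<and> tgt (p i) = src (p (i + 1))})"

definition shiftz :: "int \<Rightarrow> (int \<Rightarrow> 'b) \<Rightarrow> (int \<Rightarrow> 'b)" where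
  "shiftz i x = (\<lambda>k. x (k + i))"

definition right_ray :: "(int \<Rightarrow> 'a) set \<Rightarrow> (nat \<Rightarrow> 'a) set" where
  "right_ray Y = {(\<lambda>n. y (int n)) | y. y \<in> Y}"

definition glue :: "(int \<Rightarrow> 'a) \<Rightarrow> (nat \<Rightarrow> 'a) \<Rightarrow> (int \<Rightarrow> 'a)" where
  "glue y w = (\<lambda>k. if k < 0 then y k else w (nat k))"

definition future :: "(int \<Rightarrow> 'a) set \<Rightarrow> (int \<Rightarrow> 'a) \<Rightarrow> (nat \<Rightarrow> 'a) set" where
  "future Y y = {w \<in> right_ray Y. glue y w \<in> Y}"

definition pcons :: "'a \<Rightarrow> (nat \<Rightarrow> 'a) \<Rightarrow> (nat \<Rightarrow> 'a)" where
  "pcons a w = (\<lambda>n. if n = 0 then a else w (n - 1))"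

type_synonym 'a fvertex = "(nat \<Rightarrow> 'a) set"
text \<open>An edge of the future cover: (source, label, target).\<close>
type_synonym 'a fedge = "'a fvertex \<times> 'a \<times> 'a fvertex"

definition fc_vertices :: "(int \<Rightarrow> 'a) set \<Rightarrow> 'a fvertex set" where
  "fc_vertices Y = future Y ` Y"

definition fc_edges :: "(int \<Rightarrow> 'a) set \<Rightarrow> 'a fedge set" where
  "fc_edges Y = {(F, a, F') | F a F'. F \<in> fc_vertices Y \<and> F' \<in> fc_vertices Y \<and>
                                       F' = {w. pcons a w \<in> F}}"

definition esrc :: "'a fedge \<Rightarrow> 'a fvertex" where "esrc e = fst e"
definition elabel :: "'a fedge \<Rightarrow> 'a" where "elabel e = fst (snd e)"
definition etgt :: "'a fedge \<Rightarrow> 'a fvertex" where "etgt e = snd (snd e)"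

definition fc_shift :: "(int \<Rightarrow> 'a) set \<Rightarrow> (int \<Rightarrow> 'a fedge) set" where
  "fc_shift Y = {x. \<forall>i. x i \<in> fc_edges Y \<and> etgt (x i) = esrc (x (i + 1))}"

definition fc_label :: "(int \<Rightarrow> 'a fedge) \<Rightarrow> (int \<Rightarrow> 'a)" where
  "fc_label x = (\<lambda>i. elabel (x i))"

definition alpha :: "(int \<Rightarrow> 'a) set \<Rightarrow> (int \<Rightarrow> 'a) \<Rightarrow> (int \<Rightarrow> 'a fedge)" where
  "alpha Y y = (\<lambda>i. (future Y (shiftz i y), y i, {w. pcons (y i) w \<in> future Y (shiftz i y)}))"

definition left_class :: "(int \<Rightarrow> 'b) set \<Rightarrow> (int \<Rightarrow> 'b) \<Rightarrow> (int \<Rightarrow> 'b) set" where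
  "left_class S x = {z \<in> S. \<exists>N. \<forall>i\<le>N. z i = x i}"

definition regular_rays :: "(int \<Rightarrow> 'a) set \<Rightarrow> (int \<Rightarrow> 'a fedge) set" where
  "regular_rays Y = {x \<in> fc_shift Y.
      fc_label ` left_class (fc_shift Y) x = left_class Y (fc_label x)}"

definition periodic_pt :: "(int \<Rightarrow> 'a) \<Rightarrow> bool" where
  "periodic_pt p \<longleftrightarrow> (\<exists>n>0. \<forall>k. p (k + n) = p k)"

definition edge_prod_topology :: "(int \<Rightarrow> 'b) topology" where
  "edge_prod_topology = product_topology (\<lambda>_. discrete_topology UNIV) UNIV"

end

theory Submission
  imports Defs
begin

lemma shiftz_shiftz[simp]: "shiftz i (shiftz j y) = shiftz (i + j) y"
  by (auto simp: shiftz_def algebra_simps)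

lemma shiftz_0[simp]: "shiftz 0 y = y" by (simp add: shiftz_def)

lemma future_alt: "future Y y = {w. glue y w \<in> Y}"
proof -
  have "w \<in> right_ray Y" if "glue y w \<in> Y" for w
  proof -
    have "w = (\<lambda>n. glue y w (int n))" by (auto simp: glue_def)
    thus ?thesis using that unfolding right_ray_def by blast
  qed
  thus ?thesis unfolding future_def by blast
qed

lemma antimono_stab:
  fixes g :: "nat \<Rightarrow> 'b set"
  assumes "finite (range g)" "\<And>m m'. m \<le> m' \<Longrightarrow> g m' \<subseteq> g m"
  shows "\<exists>m0. \<forall>m. g m0 \<subseteq> g m"
proof -
  obtain a0 where "\<not> finite {a \<in> UNIV. g a = g a0}"
    using pigeonhole_infinite[of "UNIV :: nat set" g] assms(1) by auto
  hence inf: "\<not> finite {a. g a = g a0}" by simp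
  have "g a0 \<subseteq> g m" for m
  proof -
    obtain m' where "m' \<ge> m" "g m' = g a0" using inf unfolding infinite_nat_iff_unbounded_le by auto
    thus ?thesis using assms(2) by metis
  qed
  thus ?thesis by blast
qed

locale sgr =
  fixes E :: "nat set" and src tgt :: "nat \<Rightarrow> nat" and lab :: "nat \<Rightarrow> 'a" and Y :: "(int \<Rightarrow> 'a) set"
  assumes finE: "finite E"
  and Ydef: "Y = {(\<lambda>i. lab (p i)) | p. \<forall>i. p i \<in> E \<and> tgt (p i) = src (p (i + 1))}"
begin

definition path :: "(int \<Rightarrow> nat) \<Rightarrow> bool" where
  "path p \<longleftrightarrow> (\<forall>i. p i \<in> E \<and> tgt (p i) = src (p (i + 1)))"

lemma inY: "y \<in> Y \<longleftrightarrow> (\<exists>p. path p \<and> y = (\<lambda>i. lab (p i)))"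
  unfolding Ydef path_def by blast

lemma shift_inY: "y \<in> Y \<Longrightarrow> shiftz i y \<in> Y"
proof -
  assume "y \<in> Y"
  then obtain p where p: "path p" "y = (\<lambda>i. lab (p i))" using inY by blast
  have "path (\<lambda>k. p (k + i))" using p(1) unfolding path_def by (metis add.commute add.left_commute)
  moreover have "shiftz i y = (\<lambda>k. lab (p (k + i)))" using p(2) by (simp add: shiftz_def)
  ultimately show ?thesis using inY by blast
qed

lemma shift_inY_iff: "shiftz i y \<in> Y \<longleftrightarrow> y \<in> Y"
  using shift_inY[of "shiftz i y" "-i"] shift_inY[of y i] by auto

definition word :: "(int \<Rightarrow> 'b) \<Rightarrow> int \<Rightarrow> nat \<Rightarrow> (nat \<Rightarrow> 'b) \<Rightarrow> (nat \<Rightarrow> 'b)" where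
  "word l j n s = (\<lambda>k. if k < n then l (j + int k) else s (k - n))"

lemma glue_word: "glue (shiftz j y) (word y j n s) = shiftz (- int n) (glue (shiftz (j + int n) y) s)"
  by (auto simp: glue_def word_def shiftz_def fun_eq_iff algebra_simps nat_diff_distrib)

lemma future_word: "future Y (shiftz (j + int n) y) = {s. word y j n s \<in> future Y (shiftz j y)}"
  unfolding future_alt by (simp add: glue_word shift_inY_iff)

lemma future_step: "future Y (shiftz (j + 1) y) = {w. pcons (y j) w \<in> future Y (shiftz j y)}"
proof -
  have "word y j 1 s = pcons (y j) s" for s by (auto simp: word_def pcons_def)
  thus ?thesis using future_word[of j 1 y] by simp
qed

lemma future_left: "(\<And>k. k < j \<Longrightarrow> y k = y' k) \<Longrightarrow> future Y (shiftz j y) = future Y (shiftz j y')"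
  unfolding future_alt by (auto simp: glue_def shiftz_def cong: if_cong)

lemma alpha_in: "y \<in> Y \<Longrightarrow> alpha Y y \<in> fc_shift Y"
proof -
  assume y: "y \<in> Y"
  have "alpha Y y i \<in> fc_edges Y \<and> etgt (alpha Y y i) = esrc (alpha Y y (i + 1))" for i
  proof -
    have a: "alpha Y y i = (future Y (shiftz i y), y i, future Y (shiftz (i+1) y))"
      unfolding alpha_def future_step by simp
    have v1: "future Y (shiftz i y) \<in> fc_vertices Y" "future Y (shiftz (i+1) y) \<in> fc_vertices Y"
      unfolding fc_vertices_def using y shift_inY by auto
    show ?thesis unfolding fc_edges_def a
      using v1 future_step[of i y] by (auto simp: etgt_def esrc_def alpha_def)
  qed
  thus ?thesis unfolding fc_shift_def by auto
qed

lemma vertex_ne: "F \<in> fc_vertices Y \<Longrightarrow> \<exists>s. s \<in> F"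
proof -
  assume "F \<in> fc_vertices Y"
  then obtain y where "y \<in> Y" "F = future Y y" unfolding fc_vertices_def by auto
  moreover have "glue y (\<lambda>n. y (int n)) = y" by (auto simp: glue_def)
  ultimately show ?thesis unfolding future_alt by (metis mem_Collect_eq)
qed

lemma path_vertices:
  assumes "z \<in> fc_shift Y"
  shows "esrc (z (j + int n)) = {s. word (fc_label z) j n s \<in> esrc (z j)}"
proof (induction n)
  case 0
  then show ?case by (simp add: word_def)
next
  case (Suc n)
  have e: "z (j + int n) \<in> fc_edges Y" and t: "etgt (z (j + int n)) = esrc (z (j + int n + 1))"
    using assms unfolding fc_shift_def by auto
  have t2: "etgt (z (j + int n)) = {w. pcons (elabel (z (j + int n))) w \<in> esrc (z (j + int n))}"
    using e unfolding fc_edges_def by (auto simp: etgt_def elabel_def esrc_def)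
  have w: "word (fc_label z) j n (pcons (elabel (z (j + int n))) w) = word (fc_label z) j (Suc n) w" for w
    by (auto simp: word_def pcons_def fc_label_def fun_eq_iff less_Suc_eq)
  have "esrc (z (j + int (Suc n))) = esrc (z (j + int n + 1))" by (simp add: ac_simps)
  also have "\<dots> = {w. pcons (elabel (z (j + int n))) w \<in> esrc (z (j + int n))}" using t t2 by simp
  also have "\<dots> = {s. word (fc_label z) j (Suc n) s \<in> esrc (z j)}" using Suc w by simp
  finally show ?case .
qed

lemma path_glue: "path p1 \<Longrightarrow> path p2 \<Longrightarrow> src (p1 0) = src (p2 0) \<Longrightarrow>
   path (\<lambda>k. if k < 0 then p1 k else p2 k)"
proof -
  assume a: "path p1" "path p2" "src (p1 0) = src (p2 0)"
  have "(if i < 0 then p1 i else p2 i) \<in> E \<and> tgt (if i < 0 then p1 i else p2 i) = src (if i + 1 < 0 then p1 (i+1) else p2 (i+1))" for i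
  proof -
    consider "i + 1 < 0" | "i + 1 = 0" | "i \<ge> 0" by linarith
    thus ?thesis
    proof cases
      case 2 then have "i = -1" by simp
      then show ?thesis using a unfolding path_def by (metis add.commute add.right_inverse less_irrefl neg_less_0_iff_less zero_less_one)
    qed (use a in \<open>auto simp: path_def\<close>)
  qed
  thus ?thesis unfolding path_def by simp
qed

lemma closed:
  assumes "\<forall>m::nat. \<exists>t\<in>Y. \<forall>k. \<bar>k\<bar> \<le> int m \<longrightarrow> t k = z k"
  shows "z \<in> Y"
proof -
  define Pi where "Pi m = {p. path p \<and> (\<forall>k. \<bar>k\<bar> \<le> int m \<longrightarrow> lab (p k) = z k)}" for m
  have Pine: "Pi m \<noteq> {}" for m
  proof -
    obtain t where t: "t \<in> Y" "\<forall>k. \<bar>k\<bar> \<le> int m \<longrightarrow> t k = z k" using assms by blast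
    then obtain p where "path p" "t = (\<lambda>i. lab (p i))" using inY by blast
    thus ?thesis unfolding Pi_def using t(2) by auto
  qed
  define res where "res n p = (\<lambda>k. if \<bar>k\<bar> \<le> int n then p k else 0)" for n and p :: "int \<Rightarrow> nat"
  define B where "B n = {\<rho>. \<forall>k. (k \<in> {-int n..int n} \<longrightarrow> \<rho> k \<in> E) \<and> (k \<notin> {-int n..int n} \<longrightarrow> \<rho> k = 0)}" for n
  have finB: "finite (B n)" for n unfolding B_def by (rule finite_set_of_finite_funs) (auto simp: finE)
  define Img where "Img n m = res n ` Pi m" for n m
  have ImgB: "Img n m \<subseteq> B n" for n m
    unfolding Img_def B_def res_def Pi_def path_def by auto
  have fr: "finite (range (Img n))" for n
    by (rule finite_subset[of _ "Pow (B n)"]) (use ImgB finB in auto)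
  have am: "m \<le> m' \<Longrightarrow> Img n m' \<subseteq> Img n m" for n m m'
    unfolding Img_def Pi_def by auto
  have "\<forall>n. \<exists>m0. \<forall>m. Img n m0 \<subseteq> Img n m" using antimono_stab[OF fr am] by blast
  then obtain m0 where m0: "\<And>n m. Img n (m0 n) \<subseteq> Img n m" by metis
  define Ext where "Ext n = Img n (m0 n)" for n
  have Extne: "Ext n \<noteq> {}" for n unfolding Ext_def Img_def using Pine by auto
  have rr: "res n (res (Suc n) p) = res n p" for n p unfolding res_def by auto
  have step: "\<exists>\<sigma>. \<sigma> \<in> Ext (Suc n) \<and> res n \<sigma> = \<rho>" if "\<rho> \<in> Ext n" for n \<rho>
  proof -
    have "\<rho> \<in> Img n (m0 (Suc n))" using that m0 unfolding Ext_def by blast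
    then obtain p where p: "p \<in> Pi (m0 (Suc n))" "\<rho> = res n p" unfolding Img_def by auto
    have "res (Suc n) p \<in> Ext (Suc n)" unfolding Ext_def Img_def using p by auto
    thus ?thesis using p rr by metis
  qed
  define f where "f = rec_nat (SOME \<rho>. \<rho> \<in> Ext 0) (\<lambda>n \<rho>. SOME \<sigma>. \<sigma> \<in> Ext (Suc n) \<and> res n \<sigma> = \<rho>)"
  have f0: "f 0 = (SOME \<rho>. \<rho> \<in> Ext 0)" and fS: "f (Suc n) = (SOME \<sigma>. \<sigma> \<in> Ext (Suc n) \<and> res n \<sigma> = f n)" for n
    unfolding f_def by auto
  have fE: "f n \<in> Ext n" for n
  proof (induction n)
    case 0 then show ?case unfolding f0 by (metis Extne some_in_eq)
  next
    case (Suc n) show ?case unfolding fS using someI_ex[OF step[OF Suc]] by blast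
  qed
  have fr2: "res n (f (Suc n)) = f n" for n
    unfolding fS using someI_ex[OF step[OF fE[of n]]] by blast
  have cons: "f m k = f n k" if "n \<le> m" "\<bar>k\<bar> \<le> int n" for n m k
    using that(1)
  proof (induction m rule: dec_induct)
    case base then show ?case by simp
  next
    case (step m)
    have "f (Suc m) k = res m (f (Suc m)) k" unfolding res_def using step that by auto
    then show ?case using fr2 step by simp
  qed
  have fP: "\<exists>p\<in>Pi n. f n = res n p" for n
  proof -
    have "f n \<in> Img n n" using fE m0 unfolding Ext_def by blast
    thus ?thesis unfolding Img_def by auto
  qed
  define q where "q k = f (nat \<bar>k\<bar>) k" for k
  have qf: "q k = f n k" if "\<bar>k\<bar> \<le> int n" for k n
    unfolding q_def using cons[of "nat \<bar>k\<bar>" n k] that by auto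
  have "path q \<and> z = (\<lambda>i. lab (q i))"
  proof -
    have "q k \<in> E \<and> tgt (q k) = src (q (k + 1)) \<and> lab (q k) = z k" for k
    proof -
      define n where "n = nat \<bar>k\<bar> + 1"
      obtain p where p: "p \<in> Pi n" "f n = res n p" using fP by blast
      have k1: "\<bar>k\<bar> \<le> int n" "\<bar>k+1\<bar> \<le> int n" unfolding n_def by auto
      have "q k = p k" "q (k+1) = p (k+1)" using qf[OF k1(1)] qf[OF k1(2)] p(2) k1 unfolding res_def by auto
      thus ?thesis using p(1) k1 unfolding Pi_def path_def by auto
    qed
    thus ?thesis unfolding path_def by auto
  qed
  thus ?thesis using inY by blast
qed

definition Gs :: "(int \<Rightarrow> 'a) \<Rightarrow> nat \<Rightarrow> (nat \<Rightarrow> 'a) set" where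
  "Gs t m = {s. \<exists>t'\<in>Y. (\<forall>k. - int m \<le> k \<and> k < 0 \<longrightarrow> t' k = t k) \<and> s = (\<lambda>n. t' (int n))}"

definition Gen :: "nat set \<Rightarrow> (nat \<Rightarrow> 'a) set" where
  "Gen Q = {(\<lambda>n. lab (p (int n))) | p. path p \<and> src (p 0) \<in> Q}"

lemma Gs_Gen: "Gs t m = Gen {src (p 0) | p. path p \<and> (\<forall>k. - int m \<le> k \<and> k < 0 \<longrightarrow> lab (p k) = t k)}"
proof
  show "Gs t m \<subseteq> Gen {src (p 0) | p. path p \<and> (\<forall>k. - int m \<le> k \<and> k < 0 \<longrightarrow> lab (p k) = t k)}"
  proof
    fix s assume "s \<in> Gs t m"
    then obtain t' where t': "t' \<in> Y" "\<forall>k. - int m \<le> k \<and> k < 0 \<longrightarrow> t' k = t k" "s = (\<lambda>n. t' (int n))"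
      unfolding Gs_def by blast
    then obtain p where p: "path p" "t' = (\<lambda>i. lab (p i))" using inY by blast
    show "s \<in> Gen {src (p 0) | p. path p \<and> (\<forall>k. - int m \<le> k \<and> k < 0 \<longrightarrow> lab (p k) = t k)}"
    proof -
      have "src (p 0) \<in> {src (p 0) | p. path p \<and> (\<forall>k. - int m \<le> k \<and> k < 0 \<longrightarrow> lab (p k) = t k)}"
        using p t' by auto
      moreover have "s = (\<lambda>n. lab (p (int n)))" using p t' by auto
      ultimately show ?thesis unfolding Gen_def using p(1) by (intro CollectI exI[of _ p]) simp
    qed
  qed
next
  show "Gen {src (p 0) | p. path p \<and> (\<forall>k. - int m \<le> k \<and> k < 0 \<longrightarrow> lab (p k) = t k)} \<subseteq> Gs t m"
  proof
    fix s assume "s \<in> Gen {src (p 0) | p. path p \<and> (\<forall>k. - int m \<le> k \<and> k < 0 \<longrightarrow> lab (p k) = t k)}"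
    then obtain p2 where p2: "path p2" "s = (\<lambda>n. lab (p2 (int n)))"
      "src (p2 0) \<in> {src (p 0) | p. path p \<and> (\<forall>k. - int m \<le> k \<and> k < 0 \<longrightarrow> lab (p k) = t k)}"
      unfolding Gen_def by blast
    then obtain p1 where p1: "path p1" "\<forall>k. - int m \<le> k \<and> k < 0 \<longrightarrow> lab (p1 k) = t k" "src (p1 0) = src (p2 0)"
      by auto
    note p = p2(1,2) p1
    define q where "q = (\<lambda>k. if k < 0 then p1 k else p2 k)"
    have "path q" unfolding q_def using path_glue p by auto
    hence "(\<lambda>i. lab (q i)) \<in> Y" using inY by blast
    moreover have "\<forall>k. - int m \<le> k \<and> k < 0 \<longrightarrow> lab (q k) = t k" using p(4) unfolding q_def by auto
    moreover have "s = (\<lambda>n. lab (q (int n)))" using p(2) unfolding q_def by auto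
    ultimately show "s \<in> Gs t m" unfolding Gs_def
      by (intro CollectI bexI[of _ "\<lambda>i. lab (q i)"]) auto
  qed
qed

lemma finite_Gs: "finite {Gs t m | t m. True}"
proof (rule finite_subset)
  show "{Gs t m | t m. True} \<subseteq> Gen ` Pow (src ` E)"
  proof
    fix G assume "G \<in> {Gs t m | t m. True}"
    then obtain t m where "G = Gs t m" by auto
    moreover have "{src (p 0) | p. path p \<and> (\<forall>k. - int m \<le> k \<and> k < 0 \<longrightarrow> lab (p k) = t k)} \<in> Pow (src ` E)"
      unfolding path_def by (auto intro: imageI)
    ultimately show "G \<in> Gen ` Pow (src ` E)" using Gs_Gen[of t m] by (simp only:) (rule imageI)
  qed
  show "finite (Gen ` Pow (src ` E))" using finE by simp
qed

lemma future_Gs: "future Y t \<subseteq> Gs t m"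
proof
  fix s assume "s \<in> future Y t"
  hence "glue t s \<in> Y" unfolding future_alt by simp
  moreover have "\<forall>k. - int m \<le> k \<and> k < 0 \<longrightarrow> glue t s k = t k" by (simp add: glue_def)
  moreover have "s = (\<lambda>n. glue t s (int n))" by (simp add: glue_def)
  ultimately show "s \<in> Gs t m" unfolding Gs_def by blast
qed

lemma Gs_anti: "m \<le> m' \<Longrightarrow> Gs t m' \<subseteq> Gs t m"
proof
  fix s assume "m \<le> m'" "s \<in> Gs t m'"
  then obtain t' where t': "t' \<in> Y" "\<forall>k. - int m' \<le> k \<and> k < 0 \<longrightarrow> t' k = t k" "s = (\<lambda>n. t' (int n))"
    unfolding Gs_def by blast
  hence "\<forall>k. - int m \<le> k \<and> k < 0 \<longrightarrow> t' k = t k" using \<open>m \<le> m'\<close> by auto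
  thus "s \<in> Gs t m" unfolding Gs_def using t' by blast
qed

lemma Gs_window: "(\<And>k. - int m \<le> k \<Longrightarrow> k < 0 \<Longrightarrow> t' k = t k) \<Longrightarrow> Gs t' m = Gs t m"
proof -
  assume a: "\<And>k. - int m \<le> k \<Longrightarrow> k < 0 \<Longrightarrow> t' k = t k"
  have "(\<forall>k. - int m \<le> k \<and> k < 0 \<longrightarrow> t'' k = t' k) \<longleftrightarrow> (\<forall>k. - int m \<le> k \<and> k < 0 \<longrightarrow> t'' k = t k)" for t''
    using a by auto
  thus ?thesis unfolding Gs_def by simp
qed

lemma future_stab: "\<exists>m0. future Y t = Gs t m0"
proof -
  have "range (Gs t) \<subseteq> {Gs t m | t m. True}" by blast
  hence "finite (range (Gs t))" using finite_subset finite_Gs by blast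
  from antimono_stab[of "Gs t", OF this Gs_anti]
  obtain m0 where m0: "\<And>m. Gs t m0 \<subseteq> Gs t m" by blast
  have "Gs t m0 \<subseteq> future Y t"
  proof
    fix s assume s: "s \<in> Gs t m0"
    have "glue t s \<in> Y"
    proof (rule closed, intro allI)
      fix M :: nat
      from s m0 have "s \<in> Gs t M" by blast
      then obtain t' where t': "t' \<in> Y" "\<forall>k. - int M \<le> k \<and> k < 0 \<longrightarrow> t' k = t k" "s = (\<lambda>n. t' (int n))"
        unfolding Gs_def by blast
      have "\<forall>k. \<bar>k\<bar> \<le> int M \<longrightarrow> t' k = glue t s k" using t' by (auto simp: glue_def)
      thus "\<exists>t''\<in>Y. \<forall>k. \<bar>k\<bar> \<le> int M \<longrightarrow> t'' k = glue t s k" using t'(1) by blast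
    qed
    thus "s \<in> future Y t" unfolding future_alt by simp
  qed
  thus ?thesis using future_Gs by blast
qed

lemma finite_futures: "finite (range (future Y))"
proof (rule finite_subset[OF _ finite_Gs])
  show "range (future Y) \<subseteq> {Gs t m | t m. True}"
  proof
    fix F assume "F \<in> range (future Y)"
    then obtain t where t: "F = future Y t" by auto
    obtain m0 where "future Y t = Gs t m0" using future_stab by blast
    thus "F \<in> {Gs t m | t m. True}" using t by auto
  qed
qed

lemma future_window:
  "\<exists>m0. \<forall>t'. (\<forall>k. - int m0 \<le> k \<and> k < 0 \<longrightarrow> t' k = t k) \<longrightarrow> future Y t' \<subseteq> future Y t"
proof -
  obtain m0 where "future Y t = Gs t m0" using future_stab by blast
  show ?thesis
  proof (intro exI allI impI)
    fix t' assume "\<forall>k. - int m0 \<le> k \<and> k < 0 \<longrightarrow> t' k = t k"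
    hence "Gs t' m0 = Gs t m0" by (intro Gs_window) auto
    thus "future Y t' \<subseteq> future Y t" using future_Gs[of t' m0] \<open>future Y t = Gs t m0\<close> by simp
  qed
qed

lemma alpha_simps[simp]: "esrc (alpha Y p j) = future Y (shiftz j p)" "elabel (alpha Y p j) = p j"
  "etgt (alpha Y p j) = future Y (shiftz (j+1) p)"
  by (auto simp: alpha_def esrc_def elabel_def etgt_def future_step)

lemma inf_below: "infinite (J :: int set) \<Longrightarrow> J \<subseteq> {..N} \<Longrightarrow> \<exists>c\<in>J. c < b"
proof (rule ccontr)
  assume "infinite J" "J \<subseteq> {..N}" "\<not> (\<exists>c\<in>J. c < b)"
  hence "J \<subseteq> {b..N}" by force
  thus False using \<open>infinite J\<close> finite_subset by blast
qed

lemma funpow_word: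
  assumes "Pn > 0"
  shows "((word y c Pn) ^^ k) s n = (if n < k * Pn then y (c + int (n mod Pn)) else s (n - k * Pn))"
proof (induction k arbitrary: n)
  case 0 then show ?case by simp
next
  case (Suc k)
  have "((word y c Pn) ^^ Suc k) s n = word y c Pn (((word y c Pn) ^^ k) s) n" by simp
  also have "\<dots> = (if n < Pn then y (c + int n) else ((word y c Pn) ^^ k) s (n - Pn))" by (simp add: word_def)
  also have "\<dots> = (if n < Suc k * Pn then y (c + int (n mod Pn)) else s (n - Suc k * Pn))"
  proof (cases "n < Pn")
    case True then show ?thesis by simp
  next
    case False
    hence "n mod Pn = (n - Pn) mod Pn" using le_mod_geq by simp
    moreover have "(n - Pn < k * Pn) = (n < Suc k * Pn)" using False by auto
    moreover have "n - Pn - k * Pn = n - Suc k * Pn" by simp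
    ultimately show ?thesis using False Suc by simp
  qed
  finally show ?case .
qed

lemma construct:
  assumes x: "x \<in> fc_shift Y"
  shows "\<exists>p x' a P. p \<in> Y \<and> P > 0 \<and> (\<forall>k. p (k + P) = p k) \<and> x' \<in> fc_shift Y \<and>
     (\<forall>i\<ge>N. x' i = x i) \<and> (\<forall>j<a. x' j = alpha Y p j)"
proof -
  have "x N \<in> fc_edges Y" using x unfolding fc_shift_def by auto
  hence "esrc (x N) \<in> fc_vertices Y" unfolding fc_edges_def esrc_def by auto
  then obtain y0 where y0: "y0 \<in> Y" "esrc (x N) = future Y y0" unfolding fc_vertices_def by auto
  define y where "y = shiftz (-N) y0"
  have yY: "y \<in> Y" unfolding y_def using y0 shift_inY by auto
  have yN: "future Y (shiftz N y) = esrc (x N)" unfolding y_def using y0 by simp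
  obtain \<pi> where \<pi>: "path \<pi>" "y = (\<lambda>i. lab (\<pi> i))" using yY inY by blast
  define h where "h j = (future Y (shiftz j y), \<pi> j)" for j
  have infI: "infinite {..N}" by (simp add: infinite_Iic)
  have "h ` {..N} \<subseteq> range (future Y) \<times> E" unfolding h_def using \<pi>(1) unfolding path_def by auto
  hence "finite (h ` {..N})" using finite_futures finE finite_subset by blast
  from pigeonhole_infinite[OF infI this]
  obtain a where a: "a \<in> {..N}" "infinite {j \<in> {..N}. h j = h a}" by blast
  obtain m0 where m0: "\<And>t'. (\<forall>k. - int m0 \<le> k \<and> k < 0 \<longrightarrow> t' k = shiftz a y k) \<Longrightarrow> future Y t' \<subseteq> future Y (shiftz a y)"
    using future_window[of "shiftz a y"] by blast
  obtain c where c: "c \<in> {j \<in> {..N}. h j = h a}" "c < a - int m0"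
    using inf_below[OF a(2), of N "a - int m0"] by blast
  have ca: "c < a" "a \<le> N" using c a by auto
  have Fca: "future Y (shiftz c y) = future Y (shiftz a y)" and \<pi>ca: "\<pi> c = \<pi> a"
    using c unfolding h_def by auto
  define P where "P = a - c"
  have P0: "P > 0" unfolding P_def using ca by simp
  define p where "p k = y (c + (k - c) mod P)" for k
  have pP: "p (k + P) = p k" for k
  proof -
    have "k + P - c = (k - c) + P" by simp
    hence "(k + P - c) mod P = (k - c) mod P" by (metis mod_add_self2)
    thus ?thesis unfolding p_def by simp
  qed
  have py: "p k = y k" if "c \<le> k" "k < a" for k
  proof -
    have "(k - c) mod P = k - c" using that unfolding P_def by (intro mod_pos_pos_trivial) auto
    thus ?thesis unfolding p_def by simp
  qed
  define \<pi>' where "\<pi>' k = \<pi> (c + (k - c) mod P)" for k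
  have "path \<pi>'"
    unfolding path_def
  proof
    fix k
    define r where "r = (k - c) mod P"
    have r: "0 \<le> r" "r < P" unfolding r_def using P0 by auto
    have r1: "(k + 1 - c) mod P = (r + 1) mod P" unfolding r_def by (simp add: mod_simps algebra_simps)
    have "\<pi>' k \<in> E" using \<pi>(1) unfolding path_def \<pi>'_def by auto
    moreover have "tgt (\<pi>' k) = src (\<pi>' (k + 1))"
    proof (cases "r + 1 < P")
      case True
      hence "(r + 1) mod P = r + 1" using r by (intro mod_pos_pos_trivial) auto
      thus ?thesis using \<pi>(1) r1 unfolding path_def \<pi>'_def r_def by (simp add: algebra_simps)
    next
      case False
      hence "r + 1 = P" using r by simp
      hence "(r + 1) mod P = 0" by simp
      moreover have "c + r + 1 = a" using \<open>r + 1 = P\<close> unfolding P_def by simp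
      ultimately show ?thesis using \<pi>(1) r1 \<pi>ca unfolding path_def \<pi>'_def r_def
        by (metis add.assoc add.right_neutral)
    qed
    ultimately show "\<pi>' k \<in> E \<and> tgt (\<pi>' k) = src (\<pi>' (k + 1))" by simp
  qed
  moreover have "p = (\<lambda>k. lab (\<pi>' k))" unfolding p_def \<pi>'_def \<pi>(2) by simp
  ultimately have pY: "p \<in> Y" using inY by blast
  have sub1: "future Y (shiftz a p) \<subseteq> future Y (shiftz a y)"
  proof (rule m0, intro allI impI)
    fix k assume "- int m0 \<le> k \<and> k < 0"
    thus "shiftz a p k = shiftz a y k" unfolding shiftz_def using py c by auto
  qed
  define Pn where "Pn = nat P"
  have Pn: "Pn > 0" "int Pn = P" unfolding Pn_def using P0 by auto
  have inv: "word y c Pn s \<in> future Y (shiftz a y)" if "s \<in> future Y (shiftz a y)" for s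
  proof -
    have "c + int Pn = a" using Pn unfolding P_def by simp
    hence "future Y (shiftz a y) = {s. word y c Pn s \<in> future Y (shiftz c y)}"
      using future_word[of c Pn y] by simp
    thus ?thesis using that Fca by auto
  qed
  have invk: "((word y c Pn) ^^ k) s \<in> future Y (shiftz a y)" if "s \<in> future Y (shiftz a y)" for s k
    by (induction k) (use that inv in auto)
  have sub2: "future Y (shiftz a y) \<subseteq> future Y (shiftz a p)"
  proof
    fix s assume s: "s \<in> future Y (shiftz a y)"
    have "glue (shiftz a p) s \<in> Y"
    proof (rule closed, intro allI)
      fix M :: nat
      define u where "u = ((word y c Pn) ^^ M) s"
      define L where "L = int (M * Pn)"
      have "M \<le> M * Pn" using Pn(1) by simp
      hence "int M \<le> L" unfolding L_def by (simp only: of_nat_le_iff)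
      hence L: "L = int M * P" "L \<ge> int M" unfolding L_def using Pn by auto
      have "glue (shiftz a y) u \<in> Y" using invk[OF s] unfolding u_def future_alt by simp
      hence tY: "shiftz L (glue (shiftz a y) u) \<in> Y" using shift_inY by blast
      have "shiftz L (glue (shiftz a y) u) k = glue (shiftz a p) s k" if "\<bar>k\<bar> \<le> int M" for k
      proof (cases "k < 0")
        case False
        hence "nat (k + L) = nat k + nat L" using \<open>int M \<le> L\<close> by (intro nat_add_distrib) auto
        hence "nat (k + L) = nat k + M * Pn" unfolding L_def by (simp only: nat_int)
        thus ?thesis using False L unfolding shiftz_def glue_def u_def funpow_word[OF Pn(1)] by auto
      next
        case True
        have "- k \<le> int M" using that True by simp
        hence kL: "k + L \<ge> 0" "k + L < L" using True L(2) by linarith+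
        hence "nat (k + L) < M * Pn" unfolding L_def by linarith
        hence 1: "shiftz L (glue (shiftz a y) u) k = y (c + int (nat (k + L) mod Pn))"
          unfolding shiftz_def glue_def u_def funpow_word[OF Pn(1)] using kL by auto
        have "int (nat (k + L) mod Pn) = (k + L) mod P" using kL Pn by (simp add: zmod_int)
        also have "\<dots> = k mod P" unfolding L by simp
        also have "\<dots> = (k + a - c) mod P"
        proof -
          have "k + a - c = k + P" unfolding P_def by simp
          thus ?thesis by (metis mod_add_self2)
        qed
        finally have 2: "int (nat (k + L) mod Pn) = (k + a - c) mod P" .
        have "glue (shiftz a p) s k = p (k + a)" using True unfolding glue_def shiftz_def by simp
        thus ?thesis using 1 2 unfolding p_def by (simp add: algebra_simps)
      qed
      thus "\<exists>t\<in>Y. \<forall>k. \<bar>k\<bar> \<le> int M \<longrightarrow> t k = glue (shiftz a p) s k" using tY by blast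
    qed
    thus "s \<in> future Y (shiftz a p)" unfolding future_alt by simp
  qed
  have Fa: "future Y (shiftz a p) = future Y (shiftz a y)" using sub1 sub2 by blast
  define x' where "x' i = (if i < a then alpha Y p i else if i < N then alpha Y y i else x i)" for i
  have ap: "alpha Y p \<in> fc_shift Y" and ay: "alpha Y y \<in> fc_shift Y" using alpha_in pY yY by auto
  have "x' i \<in> fc_edges Y \<and> etgt (x' i) = esrc (x' (i + 1))" for i
  proof -
    have e: "x' i \<in> fc_edges Y" using ap ay x unfolding x'_def fc_shift_def by auto
    consider "i + 1 < a" | "i + 1 = a" | "a \<le> i \<and> i + 1 < N" | "a \<le> i \<and> i + 1 = N" | "N \<le> i" using ca by linarith
    hence "etgt (x' i) = esrc (x' (i + 1))"
    proof cases
      case 1 then show ?thesis using ap unfolding x'_def fc_shift_def by auto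
    next
      case 2
      have "esrc (x' a) = future Y (shiftz a y)"
        using ca yN by (auto simp: x'_def)
      then show ?thesis using 2 Fa by (auto simp: x'_def)
    next
      case 3 then show ?thesis using ay unfolding x'_def fc_shift_def by auto
    next
      case 4 then show ?thesis using yN by (auto simp: x'_def)
    next
      case 5 then show ?thesis using x ca unfolding x'_def fc_shift_def by auto
    qed
    thus ?thesis using e by simp
  qed
  hence "x' \<in> fc_shift Y" unfolding fc_shift_def by simp
  moreover have "\<forall>i\<ge>N. x' i = x i" unfolding x'_def using ca by auto
  moreover have "\<forall>j<a. x' j = alpha Y p j" unfolding x'_def by auto
  ultimately show ?thesis using pY P0 pP by blast
qed

lemma regular:
  assumes pY: "p \<in> Y" and x': "x' \<in> fc_shift Y" and agree: "\<forall>j<a. x' j = alpha Y p j"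
  shows "x' \<in> regular_rays Y"
proof -
  have "fc_label ` left_class (fc_shift Y) x' \<subseteq> left_class Y (fc_label x')"
  proof
    fix l assume "l \<in> fc_label ` left_class (fc_shift Y) x'"
    then obtain z N1 where z: "z \<in> fc_shift Y" "\<forall>i\<le>N1. z i = x' i" "l = fc_label z"
      unfolding left_class_def by auto
    define K where "K = min N1 (a - 1)"
    have zK: "z i = alpha Y p i" if "i \<le> K" for i using z(2) agree that unfolding K_def by auto
    have lK: "l i = p i" if "i \<le> K" for i using zK[OF that] z(3) unfolding fc_label_def by simp
    have "l \<in> Y"
    proof (rule closed, intro allI)
      fix M :: nat
      define n where "n = nat (int M - K + 1)"
      have Kn: "int M < K + int n" unfolding n_def by linarith
      have "z (K + int n) \<in> fc_edges Y" using z(1) unfolding fc_shift_def by auto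
      hence "esrc (z (K + int n)) \<in> fc_vertices Y" unfolding fc_edges_def esrc_def by auto
      then obtain s where "s \<in> esrc (z (K + int n))" using vertex_ne by blast
      hence "word l K n s \<in> esrc (z K)" using path_vertices[OF z(1), of K n] z(3) by simp
      hence "word l K n s \<in> future Y (shiftz K p)" using zK[of K] by simp
      hence gY: "glue (shiftz K p) (word l K n s) \<in> Y" unfolding future_alt by simp
      define t where "t = shiftz (-K) (glue (shiftz K p) (word l K n s))"
      have tY: "t \<in> Y" unfolding t_def using gY shift_inY by blast
      have "t k = l k" if "\<bar>k\<bar> \<le> int M" for k
      proof (cases "k < K")
        case True
        then show ?thesis unfolding t_def using lK[of k] by (simp add: shiftz_def glue_def)
      next
        case False
        have "nat (k - K) < n" using Kn that False by linarith
        then show ?thesis unfolding t_def using False by (simp add: shiftz_def glue_def word_def)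
      qed
      thus "\<exists>t\<in>Y. \<forall>k. \<bar>k\<bar> \<le> int M \<longrightarrow> t k = l k" using tY by blast
    qed
    moreover have "\<forall>i\<le>N1. l i = fc_label x' i" using z unfolding fc_label_def by simp
    ultimately show "l \<in> left_class Y (fc_label x')" unfolding left_class_def by blast
  qed
  moreover have "left_class Y (fc_label x') \<subseteq> fc_label ` left_class (fc_shift Y) x'"
  proof
    fix y' assume "y' \<in> left_class Y (fc_label x')"
    then obtain N1 where y': "y' \<in> Y" "\<forall>i\<le>N1. y' i = fc_label x' i" unfolding left_class_def by auto
    define K where "K = min N1 (a - 1)"
    have yK: "y' i = p i" if "i \<le> K" for i using y'(2) agree that unfolding K_def fc_label_def by auto
    have "alpha Y y' i = x' i" if "i \<le> K" for i
    proof -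
      have "future Y (shiftz i y') = future Y (shiftz i p)" using yK that by (intro future_left) auto
      moreover have "x' i = alpha Y p i" using agree that unfolding K_def by auto
      ultimately show ?thesis using yK[OF that] by (simp add: alpha_def)
    qed
    hence "alpha Y y' \<in> left_class (fc_shift Y) x'" unfolding left_class_def using alpha_in[OF y'(1)] by blast
    moreover have "fc_label (alpha Y y') = y'" by (simp add: fc_label_def fun_eq_iff)
    ultimately show "y' \<in> fc_label ` left_class (fc_shift Y) x'" by (metis image_eqI)
  qed
  ultimately show ?thesis unfolding regular_rays_def using x' by blast
qed

lemma fc_shift_shift: "z \<in> fc_shift Y \<Longrightarrow> shiftz i z \<in> fc_shift Y"
  unfolding fc_shift_def shiftz_def by (simp add: algebra_simps)

lemma limit:
  assumes ms: "Metric_space (fc_shift Y) d"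
  and top: "Metric_space.mtopology (fc_shift Y) d = subtopology edge_prod_topology (fc_shift Y)"
  and pY: "p \<in> Y" and P: "P > 0" "\<forall>k. p (k + P) = p k"
  and x': "x' \<in> fc_shift Y" and agree: "\<forall>j<a. x' j = alpha Y p j"
  shows "((\<lambda>i. d (shiftz i x') (shiftz i (alpha Y p))) \<longlongrightarrow> 0) at_bot"
proof -
  interpret m: Metric_space "fc_shift Y" d by (rule ms)
  have pn: "p (k + P * n) = p k" for k n
  proof (induction n rule: int_induct[where k=0])
    case base then show ?case by simp
  next
    case (step1 i) then show ?case using P(2)[rule_format, of "k + P * i"] by (simp add: algebra_simps)
  next
    case (step2 i) then show ?case using P(2)[rule_format, of "k + P * (i - 1)"] by (simp add: algebra_simps)
  qed
  have apn: "alpha Y p (j + P * n) = alpha Y p j" for j n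
  proof -
    have "shiftz (j + P * n) p = shiftz j p" unfolding shiftz_def using pn
      by (metis (no_types, lifting) add.assoc add.commute)
    thus ?thesis using pn unfolding alpha_def by simp
  qed
  have smod: "shiftz i (alpha Y p) = shiftz (i mod P) (alpha Y p)" for i
  proof
    fix k
    have "k + i = (k + i mod P) + P * (i div P)" by (simp add: algebra_simps)
    thus "shiftz i (alpha Y p) k = shiftz (i mod P) (alpha Y p) k" unfolding shiftz_def using apn by metis
  qed
  have apY: "alpha Y p \<in> fc_shift Y" using alpha_in pY by blast
  have key: "\<exists>M. \<forall>z\<in>fc_shift Y. (\<forall>k\<le>M. z k = q k) \<longrightarrow> d q z < e" if q: "q \<in> fc_shift Y" and e: "e > 0" for q e
  proof -
    have "openin (subtopology edge_prod_topology (fc_shift Y)) (m.mball q e)" using top m.openin_mball by metis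
    then obtain T where T: "openin edge_prod_topology T" "m.mball q e = T \<inter> fc_shift Y"
      unfolding openin_subtopology by blast
    have "q \<in> T" using T(2) q e by auto
    then obtain U where U: "finite {i \<in> UNIV. U i \<noteq> topspace (discrete_topology UNIV)}"
      "q \<in> Pi\<^sub>E UNIV U" "Pi\<^sub>E UNIV U \<subseteq> T"
      using T(1) unfolding edge_prod_topology_def openin_product_topology_alt by blast
    define J where "J = {i. U i \<noteq> UNIV}"
    have fJ: "finite J" using U(1) unfolding J_def by simp
    define M where "M = Max (insert 0 J)"
    have JM: "i \<le> M" if "i \<in> J" for i unfolding M_def using fJ that by simp
    show ?thesis
    proof (intro exI ballI impI)
      fix z assume z: "z \<in> fc_shift Y" "\<forall>k\<le>M. z k = q k"
      have "z \<in> Pi\<^sub>E UNIV U"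
      proof -
        have "z i \<in> U i" for i
        proof (cases "i \<in> J")
          case True then show ?thesis using z(2) JM U(2) by (auto simp: PiE_iff)
        next
          case False then show ?thesis unfolding J_def by auto
        qed
        thus ?thesis by (simp add: PiE_iff)
      qed
      hence "z \<in> m.mball q e" using U(3) T(2) z(1) by blast
      thus "d q z < e" by simp
    qed
  qed
  show ?thesis
    unfolding tendsto_iff eventually_at_bot_linorder
  proof (intro allI impI)
    fix e :: real assume e: "e > 0"
    have "\<forall>r. \<exists>M. \<forall>z\<in>fc_shift Y. (\<forall>k\<le>M. z k = shiftz r (alpha Y p) k) \<longrightarrow> d (shiftz r (alpha Y p)) z < e"
      using key fc_shift_shift[OF apY] e by blast
    then obtain Mf where Mf: "\<And>r z. z \<in> fc_shift Y \<Longrightarrow> (\<forall>k\<le>Mf r. z k = shiftz r (alpha Y p) k) \<Longrightarrow> d (shiftz r (alpha Y p)) z < e"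
      by metis
    define MM where "MM = Max (Mf ` {0..<P})"
    have MM: "Mf r \<le> MM" if "r \<in> {0..<P}" for r unfolding MM_def using that by simp
    show "\<exists>N. \<forall>i\<le>N. dist (d (shiftz i x') (shiftz i (alpha Y p))) 0 < e"
    proof (intro exI allI impI)
      fix i assume i: "i \<le> a - MM - 1"
      define r where "r = i mod P"
      have r: "r \<in> {0..<P}" unfolding r_def using P(1) by simp
      have zin: "shiftz i x' \<in> fc_shift Y" using fc_shift_shift x' by blast
      have "\<forall>k\<le>Mf r. shiftz i x' k = shiftz r (alpha Y p) k"
      proof (intro allI impI)
        fix k assume "k \<le> Mf r"
        hence "k + i < a" using MM[OF r] i by linarith
        thus "shiftz i x' k = shiftz r (alpha Y p) k" using agree smod[of i] unfolding r_def
          by (metis shiftz_def)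
      qed
      hence "d (shiftz r (alpha Y p)) (shiftz i x') < e" using Mf zin by blast
      moreover have "shiftz i (alpha Y p) = shiftz r (alpha Y p)" using smod unfolding r_def by simp
      ultimately show "dist (d (shiftz i x') (shiftz i (alpha Y p))) 0 < e"
        using m.commute by simp
    qed
  qed
qed

end

theorem lemma2p16:
  fixes Y :: "(int \<Rightarrow> 'a::finite) set"
    and d :: "(int \<Rightarrow> 'a fedge) \<Rightarrow> (int \<Rightarrow> 'a fedge) \<Rightarrow> real"
    and x :: "int \<Rightarrow> 'a fedge"
    and N :: int
  assumes "sofic Y"
    and "Metric_space (fc_shift Y) d"
    and "Metric_space.mtopology (fc_shift Y) d = subtopology edge_prod_topology (fc_shift Y)"
    and "x \<in> fc_shift Y"
  shows "\<exists>p x'. p \<in> Y \<and> periodic_pt p \<and> x' \<in> fc_shift Y \<and> (\<forall>i\<ge>N. x' i = x i) \<and>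
           ((\<lambda>i. d (shiftz i x') (shiftz i (alpha Y p))) \<longlongrightarrow> 0) at_bot \<and>
           x' \<in> regular_rays Y"
proof -
  obtain E :: "nat set" and src tgt :: "nat \<Rightarrow> nat" and lab :: "nat \<Rightarrow> 'a" where
    "finite E" "Y = {(\<lambda>i. lab (p i)) | p. \<forall>i. p i \<in> E \<and> tgt (p i) = src (p (i + 1))}"
    using assms(1) unfolding sofic_def by blast
  then interpret g: sgr E src tgt lab Y by unfold_locales
  obtain p x' a P where c: "p \<in> Y" "P > 0" "\<forall>k. p (k + P) = p k" "x' \<in> fc_shift Y"
     "\<forall>i\<ge>N. x' i = x i" "\<forall>j<a. x' j = alpha Y p j"
    using g.construct[OF assms(4), of N] by blast
  have "periodic_pt p" unfolding periodic_pt_def using c(2,3) by blast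
  moreover have "((\<lambda>i. d (shiftz i x') (shiftz i (alpha Y p))) \<longlongrightarrow> 0) at_bot"
    using g.limit[OF assms(2,3) c(1,2,3,4,6)] .
  moreover have "x' \<in> regular_rays Y" using g.regular[OF c(1,4,6)] .
  ultimately show ?thesis using c by blast
qed

end
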